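(* Let $(G,\sigma)$ be a finite connected signed graph, $D$ the diameter and $\mathrm{vol}(G)=\sum_{x\in V}d_x$ the volume of $G$. Then for any $p>1$, the first (smallest) nonzero eigenvalue $\lambda_{p}^{\sigma}$ of the signed $p$-Laplacian $\Delta_p^{\sigma}$ satisfies \[ \lambda_{p}^{\sigma}\geq\frac{1}{(D+1)^{p-1}\mathrm{vol}(G)}. \]
   Context: $G=(V,E)$ is a finite simple connected graph with degrees $d_x$; $\sigma:E\to\{\pm1\}$, $\sigma_{xy}=\sigma(\{x,y\})$. For $p>1$, the signed $p$-Laplacian is $\Delta_{p}^{\sigma}f(x)=\frac{1}{d_{x}}\sum_{y\sim x}|\sigma_{xy}f(y)-f(x)|^{p-2}(\sigma_{xy}f(y)-f(x))$, with the convention $|t|^{p-2}t=0$ for $t=0$. A real $\lambda$ is an eigenvalue of $\Delta_p^\sigma$ if there is a nonzero $f:V\to\mathbb{R}$ with $-\Delta_{p}^{\sigma}f(x)=\lambda|f(x)|^{p-2}f(x)$ for all $x\in V$. *)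

theory Defs
  imports Complex_Main
begin

definition simple_graph :: "'a set \<Rightarrow> 'a set set \<Rightarrow> bool" where
  "simple_graph V E \<longleftrightarrow> finite V \<and> V \<noteq> {} \<and>
     (\<forall>e\<in>E. \<exists>x y. e = {x, y} \<and> x \<noteq> y \<and> x \<in> V \<and> y \<in> V)"

definition adj :: "'a set set \<Rightarrow> 'a \<Rightarrow> 'a \<Rightarrow> bool" where
  "adj E x y \<longleftrightarrow> {x, y} \<in> E"

definition degree :: "'a set \<Rightarrow> 'a set set \<Rightarrow> 'a \<Rightarrow> nat" where
  "degree V E x = card {y \<in> V. adj E x y}"

definition volume :: "'a set \<Rightarrow> 'a set set \<Rightarrow> nat" where
  "volume V E = (\<Sum>x\<in>V. degree V E x)"

text \<open>A walk is a nonempty list of vertices with consecutive entries adjacent;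
  its length (number of edges) is length xs - 1.\<close>

definition walk :: "'a set \<Rightarrow> 'a set set \<Rightarrow> 'a list \<Rightarrow> bool" where
  "walk V E xs \<longleftrightarrow> xs \<noteq> [] \<and> set xs \<subseteq> V \<and>
     (\<forall>i. Suc i < length xs \<longrightarrow> adj E (xs ! i) (xs ! Suc i))"

definition connected_graph :: "'a set \<Rightarrow> 'a set set \<Rightarrow> bool" where
  "connected_graph V E \<longleftrightarrow>
     (\<forall>x\<in>V. \<forall>y\<in>V. \<exists>xs. walk V E xs \<and> hd xs = x \<and> last xs = y)"

definition graph_dist :: "'a set \<Rightarrow> 'a set set \<Rightarrow> 'a \<Rightarrow> 'a \<Rightarrow> nat" where
  "graph_dist V E x y =
     (LEAST n. \<exists>xs. walk V E xs \<and> hd xs = x \<and> last xs = y \<and> length xs = Suc n)"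

definition diameter :: "'a set \<Rightarrow> 'a set set \<Rightarrow> nat" where
  "diameter V E = Max {graph_dist V E x y | x y. x \<in> V \<and> y \<in> V}"

definition signature :: "'a set set \<Rightarrow> ('a set \<Rightarrow> real) \<Rightarrow> bool" where
  "signature E \<sigma> \<longleftrightarrow> (\<forall>e\<in>E. \<sigma> e = 1 \<or> \<sigma> e = -1)"

definition phi_p :: "real \<Rightarrow> real \<Rightarrow> real" where
  "phi_p p t = (if t = 0 then 0 else \<bar>t\<bar> powr (p - 2) * t)"

definition signed_p_laplacian ::
  "'a set \<Rightarrow> 'a set set \<Rightarrow> ('a set \<Rightarrow> real) \<Rightarrow> real \<Rightarrow> ('a \<Rightarrow> real) \<Rightarrow> 'a \<Rightarrow> real" where
  "signed_p_laplacian V E \<sigma> p f x =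
     (1 / real (degree V E x)) *
     (\<Sum>y\<in>{y\<in>V. adj E x y}. phi_p p (\<sigma> {x, y} * f y - f x))"

definition is_eigenvalue ::
  "'a set \<Rightarrow> 'a set set \<Rightarrow> ('a set \<Rightarrow> real) \<Rightarrow> real \<Rightarrow> real \<Rightarrow> bool" where
  "is_eigenvalue V E \<sigma> p lam \<longleftrightarrow>
     (\<exists>f. (\<exists>x\<in>V. f x \<noteq> 0) \<and>
          (\<forall>x\<in>V. - signed_p_laplacian V E \<sigma> p f x = lam * phi_p p (f x)))"

end

theory Submission
  imports "HOL-Analysis.Convex" Defs
begin


fun pth :: "'a list \<Rightarrow> ('a \<times> 'a) list" where
  "pth (x # y # r) = (x, y) # pth (y # r)"
| "pth _ = []"

lemma pth_len: "length (pth xs) = length xs - 1"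
  by (induction xs rule: pth.induct) auto

lemma pth_set_sub: "set (pth xs) \<subseteq> set xs \<times> set xs"
  by (induction xs rule: pth.induct) auto

lemma pth_distinct: "distinct xs \<Longrightarrow> distinct (pth xs)"
  using pth_set_sub by (induction xs rule: pth.induct) fastforce+

lemma pth_swap: "distinct xs \<Longrightarrow> (a, b) \<in> set (pth xs) \<Longrightarrow> (b, a) \<notin> set (pth xs)"
proof (induction xs rule: pth.induct)
  case (1 x y r)
  then show ?case using pth_set_sub[of "y # r"] by auto
qed auto

lemma pth_snoc: "xs \<noteq> [] \<Longrightarrow> pth (xs @ [w]) = pth xs @ [(last xs, w)]"
  by (induction xs rule: pth.induct) auto

lemma pth_app: "set (pth (xs @ y # ys)) = set (pth (xs @ [y])) \<union> set (pth (y # ys))"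
proof (induction xs)
  case Nil
  then show ?case by simp
next
  case (Cons x xs)
  then show ?case by (cases xs) auto
qed

lemma walk_idx: "(\<forall>i. Suc i < length xs \<longrightarrow> adj E (xs ! i) (xs ! Suc i)) \<longleftrightarrow>
   (\<forall>e\<in>set (pth xs). adj E (fst e) (snd e))"
proof (induction xs rule: pth.induct)
  case (1 x y r)
  have "(\<forall>i. Suc i < length (x # y # r) \<longrightarrow> adj E ((x # y # r) ! i) ((x # y # r) ! Suc i))
     \<longleftrightarrow> adj E x y \<and> (\<forall>i. Suc i < length (y # r) \<longrightarrow> adj E ((y # r) ! i) ((y # r) ! Suc i))"
    (is "?L \<longleftrightarrow> ?R")
  proof
    assume ?L
    then show ?R by (metis (no_types, lifting) Suc_less_eq length_Cons nth_Cons_0 nth_Cons_Suc zero_less_Suc)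
  next
    assume ?R
    then show ?L by (metis Suc_less_eq length_Cons less_Suc_eq_0_disj nth_Cons_0 nth_Cons_Suc)
  qed
  then show ?case using 1 by simp
qed auto

lemma walk_alt: "walk V E xs \<longleftrightarrow> xs \<noteq> [] \<and> set xs \<subseteq> V \<and> (\<forall>e\<in>set (pth xs). adj E (fst e) (snd e))"
  unfolding walk_def walk_idx by simp

lemma walk_distinct:
  "walk V E xs \<Longrightarrow> \<exists>ys. walk V E ys \<and> distinct ys \<and> hd ys = hd xs \<and> last ys = last xs \<and> length ys \<le> length xs"
proof (induction "length xs" arbitrary: xs rule: less_induct)
  case less
  show ?case
  proof (cases "distinct xs")
    case True
    then show ?thesis using less.prems by blast
  next
    case False
    then obtain a z b c where xs: "xs = a @ [z] @ b @ [z] @ c" using not_distinct_decomp by blast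
    define zs where "zs = a @ [z] @ c"
    have "set (pth zs) \<subseteq> set (pth xs)"
      unfolding zs_def xs using pth_app[of a z c] pth_app[of "a @ [z] @ b" z c] pth_app[of a z "b @ [z] @ c"]
      by auto
    then have wz: "walk V E zs" using less.prems unfolding walk_alt zs_def xs by auto
    have "length zs < length xs" unfolding zs_def xs by simp
    then obtain ys where "walk V E ys \<and> distinct ys \<and> hd ys = hd zs \<and> last ys = last zs \<and> length ys \<le> length zs"
      using less.hyps wz by blast
    moreover have "hd zs = hd xs" "last zs = last xs" unfolding zs_def xs by (cases a; simp)+
    ultimately show ?thesis using \<open>length zs < length xs\<close> by auto
  qed
qed

lemma abs_opp: "(x::real) * t \<le> 0 \<Longrightarrow> \<bar>x - t\<bar> = \<bar>x\<bar> + \<bar>t\<bar>"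
  by (cases "x \<ge> 0"; cases "t \<ge> 0") (auto simp: mult_le_0_iff)

lemma holder:
  fixes a :: "'b \<Rightarrow> real"
  assumes "finite S" "\<And>i. i \<in> S \<Longrightarrow> a i \<ge> 0" "p \<ge> 1"
  shows "(\<Sum>i\<in>S. a i) powr p \<le> real (card S) powr (p - 1) * (\<Sum>i\<in>S. a i powr p)"
proof -
  define S' where "S' = {i\<in>S. a i > 0}"
  have fin: "finite S'" using assms unfolding S'_def by simp
  have s1: "(\<Sum>i\<in>S. a i) = (\<Sum>i\<in>S'. a i)"
    unfolding S'_def using assms by (intro sum.mono_neutral_right) (auto simp: order_less_le)
  have s2: "(\<Sum>i\<in>S'. a i powr p) \<le> (\<Sum>i\<in>S. a i powr p)"
    unfolding S'_def using assms by (intro sum_mono2) auto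
  have kS: "card S' \<le> card S" unfolding S'_def using assms by (intro card_mono) auto
  show ?thesis
  proof (cases "S' = {}")
    case True
    then show ?thesis using s1 s2 assms by (simp add: sum_nonneg)
  next
    case False
    define k where "k = real (card S')"
    have kpos: "k > 0" unfolding k_def using False fin by (simp add: card_gt_0_iff)
    have "(\<lambda>x. x powr p) (\<Sum>i\<in>S'. (1 / k) *\<^sub>R a i) \<le> (\<Sum>i\<in>S'. (1 / k) * (\<lambda>x. x powr p) (a i))"
      using fin False powr_convex[OF assms(3)] kpos
      by (intro convex_on_sum) (auto simp: S'_def k_def)
    then have "((\<Sum>i\<in>S'. a i) / k) powr p \<le> (\<Sum>i\<in>S'. a i powr p) / k"
      by (simp add: sum_divide_distrib[symmetric] sum_distrib_left[symmetric] divide_inverse mult.commute)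
    then have "(\<Sum>i\<in>S'. a i) powr p / k powr p \<le> (\<Sum>i\<in>S'. a i powr p) / k"
      using kpos fin by (simp add: powr_divide sum_nonneg S'_def)
    then have "(\<Sum>i\<in>S'. a i) powr p \<le> k powr p / k * (\<Sum>i\<in>S'. a i powr p)"
      using kpos by (simp add: field_simps)
    also have "k powr p / k = k powr (p - 1)" using kpos by (simp add: powr_diff)
    also have "k powr (p - 1) \<le> real (card S) powr (p - 1)"
      unfolding k_def using kS assms(3) by (intro powr_mono2) auto
    finally have "(\<Sum>i\<in>S'. a i) powr p \<le> real (card S) powr (p - 1) * (\<Sum>i\<in>S'. a i powr p)"
      by (simp add: mult_right_mono sum_nonneg)
    also have "\<dots> \<le> real (card S) powr (p - 1) * (\<Sum>i\<in>S. a i powr p)"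
      using s2 by (intro mult_left_mono) auto
    finally show ?thesis using s1 by simp
  qed
qed

lemma phi_mult_self: "p > 0 \<Longrightarrow> phi_p p t * t = \<bar>t\<bar> powr p"
proof (cases "t = 0")
  case False
  assume p: "p > 0"
  have "\<bar>t\<bar> powr 2 = t * t" using False by (simp add: powr_numeral power2_eq_square[symmetric])
  then have "\<bar>t\<bar> powr (p - 2) * t * t = \<bar>t\<bar> powr (p - 2) * \<bar>t\<bar> powr 2"
    by simp
  also have "\<dots> = \<bar>t\<bar> powr (p - 2 + 2)" by (rule powr_add[symmetric])
  also have "\<dots> = \<bar>t\<bar> powr p" by simp
  finally show ?thesis using False by (simp add: phi_p_def)
qed (simp add: phi_p_def)

lemma phi_sign: "\<bar>c\<bar> = 1 \<Longrightarrow> phi_p p (c * t) = c * phi_p p t"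
  by (cases "c = 1") (auto simp: phi_p_def abs_if split: if_splits)

lemma phi_neg: "phi_p p (- t) = - phi_p p t"
  using phi_sign[of "-1" p t] by simp

lemma phi_pos: "phi_p p t > 0 \<longleftrightarrow> t > 0"
  by (auto simp: phi_p_def zero_less_mult_iff)

lemma phi_nonneg: "phi_p p t \<ge> 0 \<longleftrightarrow> t \<ge> 0"
  by (auto simp: phi_p_def zero_le_mult_iff)

lemma tele:
  fixes f :: "'a \<Rightarrow> real"
  assumes "xs \<noteq> []" "\<forall>e\<in>set (pth xs). \<bar>s (fst e) (snd e)\<bar> = (1::real)"
  shows "sum_list (map (\<lambda>e. \<bar>f (fst e) - s (fst e) (snd e) * f (snd e)\<bar>) (pth xs))
          \<ge> \<bar>f (hd xs)\<bar> - \<bar>f (last xs)\<bar>"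
  using assms
proof (induction xs rule: pth.induct)
  case (1 x y r)
  have "\<bar>f x\<bar> \<le> \<bar>f x - s x y * f y\<bar> + \<bar>s x y * f y\<bar>" by linarith
  then have "\<bar>f x\<bar> - \<bar>f y\<bar> \<le> \<bar>f x - s x y * f y\<bar>" using 1(3) by (simp add: abs_mult)
  then show ?case using 1 by simp
qed auto

theorem theorem4p2:
  fixes V :: "'a set" and E :: "'a set set" and \<sigma> :: "'a set \<Rightarrow> real"
    and p lam :: real
  assumes "simple_graph V E"
    and "connected_graph V E"
    and "signature E \<sigma>"
    and "p > 1"
    and "is_eigenvalue V E \<sigma> p lam"
    and "lam \<noteq> 0"
  shows "lam \<ge> 1 / (real (diameter V E + 1) powr (p - 1) * real (volume V E))"
proof -
  note sg = assms(1) and conn = assms(2) and sig = assms(3) and p1 = assms(4)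
  obtain f where fnz: "\<exists>x\<in>V. f x \<noteq> 0"
    and eig: "\<forall>x\<in>V. - signed_p_laplacian V E \<sigma> p f x = lam * phi_p p (f x)"
    using assms(5) unfolding is_eigenvalue_def by blast
  have finV: "finite V" using sg unfolding simple_graph_def by blast
  define N where "N x = {y\<in>V. adj E x y}" for x
  define d where "d x = real (degree V E x)" for x
  define s where "s x y = \<sigma> {x, y}" for x y
  have finN: "finite (N x)" for x using finV unfolding N_def by simp
  have dN: "d x = real (card (N x))" for x unfolding d_def degree_def N_def by simp
  have adj_sym: "adj E x y \<Longrightarrow> adj E y x" for x y unfolding adj_def by (simp add: insert_commute)
  have s_sym: "s x y = s y x" for x y unfolding s_def by (simp add: insert_commute)
  have s_abs: "adj E x y \<Longrightarrow> \<bar>s x y\<bar> = 1" for x y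
    using sig unfolding signature_def adj_def s_def by force
  have adj_neq: "adj E x y \<Longrightarrow> x \<noteq> y" for x y
    using sg unfolding simple_graph_def adj_def
    by (metis doubleton_eq_iff insert_absorb2)
  have adj_iff: "adj E x y \<longleftrightarrow> adj E y x" for x y unfolding adj_def by (simp add: insert_commute)
  have p0: "p > 0" using p1 by simp

  have E1: "(\<Sum>y\<in>N x. phi_p p (f x - s x y * f y)) = lam * d x * phi_p p (f x)" if xV: "x \<in> V" for x
  proof (cases "d x = 0")
    case True
    then have "N x = {}" using finN dN by simp
    then show ?thesis using True by simp
  next
    case False
    have "(\<Sum>y\<in>N x. phi_p p (f x - s x y * f y)) = - (\<Sum>y\<in>N x. phi_p p (s x y * f y - f x))"
      by (simp add: sum_negf[symmetric] phi_neg[symmetric])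
    also have "\<dots> = d x * (- signed_p_laplacian V E \<sigma> p f x)"
      using False unfolding signed_p_laplacian_def N_def s_def d_def by simp
    also have "\<dots> = lam * d x * phi_p p (f x)" using eig xV by simp
    finally show ?thesis .
  qed
  have E2: "d x > 0" if "x \<in> V" "f x \<noteq> 0" for x
  proof (rule ccontr)
    assume "\<not> d x > 0"
    then have "d x = 0" using dN by (simp add: not_less)
    then have "N x = {}" using finN dN by simp
    then have e: "{y\<in>V. adj E x y} = {}" unfolding N_def .
    have "signed_p_laplacian V E \<sigma> p f x = 0" unfolding signed_p_laplacian_def e by simp
    moreover have "- signed_p_laplacian V E \<sigma> p f x = lam * phi_p p (f x)" using eig that(1) by blast
    ultimately have "lam * phi_p p (f x) = 0" by simp
    moreover have "phi_p p (f x) \<noteq> 0" using that(2) by (simp add: phi_p_def)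
    ultimately show False using assms(6) by simp
  qed

  define G where "G x y = \<bar>f x - s x y * f y\<bar> powr p" for x y
  define F where "F x y = f x * phi_p p (f x - s x y * f y)" for x y
  have FG: "F x y + F y x = G x y" if "x \<in> V" "y \<in> N x" for x y
  proof -
    have a: "adj E x y" using that unfolding N_def by simp
    define t where "t = s x y"
    have t1: "\<bar>t\<bar> = 1" using s_abs[OF a] t_def by simp
    then have tt: "t * t = 1" by (metis abs_mult_self_eq mult_cancel_left1)
    have "f y - s y x * f x = (- t) * (f x - t * f y)"
      using tt by (simp add: s_sym[of y x] t_def algebra_simps)
    then have "phi_p p (f y - s y x * f x) = - t * phi_p p (f x - t * f y)"
      using phi_sign[of "-t" p] t1 by simp
    then have "F y x = - t * f y * phi_p p (f x - t * f y)" unfolding F_def by simp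
    then have "F x y + F y x = phi_p p (f x - t * f y) * (f x - t * f y)"
      unfolding F_def t_def by (simp add: algebra_simps)
    then show ?thesis unfolding G_def t_def using phi_mult_self[OF p0] by simp
  qed
  define W where "W = (\<Sum>x\<in>V. d x * \<bar>f x\<bar> powr p)"
  have sumF: "(\<Sum>x\<in>V. \<Sum>y\<in>N x. F x y) = lam * W"
  proof -
    have "(\<Sum>x\<in>V. \<Sum>y\<in>N x. F x y) = (\<Sum>x\<in>V. f x * (lam * d x * phi_p p (f x)))"
      unfolding F_def by (intro sum.cong refl) (simp add: sum_distrib_left[symmetric] E1)
    also have "\<dots> = (\<Sum>x\<in>V. lam * (d x * (phi_p p (f x) * f x)))"
      by (intro sum.cong refl) (simp add: algebra_simps)
    also have "\<dots> = lam * W" unfolding W_def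
      by (simp add: phi_mult_self[OF p0] sum_distrib_left)
    finally show ?thesis .
  qed
  have swapF: "(\<Sum>x\<in>V. \<Sum>y\<in>N x. F y x) = (\<Sum>x\<in>V. \<Sum>y\<in>N x. F x y)"
  proof -
    have "(\<Sum>x\<in>V. \<Sum>y\<in>N x. F y x) = (\<Sum>y\<in>V. \<Sum>x\<in>{x. x \<in> V \<and> adj E x y}. F y x)"
      unfolding N_def using sum.swap_restrict[OF finV finV, of "\<lambda>x y. F y x" "adj E"] by simp
    also have "\<dots> = (\<Sum>y\<in>V. \<Sum>x\<in>N y. F y x)"
      unfolding N_def by (intro sum.cong refl) (auto simp: adj_iff)
    finally show ?thesis .
  qed
  define T where "T = (\<Sum>x\<in>V. \<Sum>y\<in>N x. G x y)"
  have TW: "T = 2 * lam * W"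
  proof -
    have "T = (\<Sum>x\<in>V. \<Sum>y\<in>N x. F x y + F y x)"
      unfolding T_def using FG by (intro sum.cong refl) auto
    also have "\<dots> = 2 * lam * W" using sumF swapF by (simp add: sum.distrib)
    finally show ?thesis .
  qed
  have Tnn: "T \<ge> 0" unfolding T_def G_def by (intro sum_nonneg) simp
  obtain x0 where x0: "x0 \<in> V" "f x0 \<noteq> 0" using fnz by blast
  have Wpos: "W > 0"
  proof -
    have "0 < d x0 * \<bar>f x0\<bar> powr p" using E2[OF x0] x0 by simp
    also have "\<dots> \<le> W" unfolding W_def using x0 finV
      by (intro member_le_sum) (auto simp: d_def)
    finally show ?thesis .
  qed
  have lampos: "lam > 0"
  proof -
    have "lam * W \<ge> 0" using Tnn TW by (simp add: mult.commute)
    then have "lam \<ge> 0" using Wpos by (simp add: zero_le_mult_iff)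
    then show ?thesis using assms(6) by simp
  qed

  have bad: "\<exists>v w. v \<in> V \<and> w \<in> V \<and> adj E v w \<and> s v w * f v * f w \<le> 0"
  proof (rule ccontr)
    assume "\<not> ?thesis"
    then have good: "s v w * f v * f w > 0" if "v \<in> V" "w \<in> N v" for v w
      using that unfolding N_def by force
    define V' where "V' = {x\<in>V. d x > 0}"
    have finV': "finite V'" using finV unfolding V'_def by simp
    have "x0 \<in> V'" using x0 E2 unfolding V'_def by blast
    then have ne: "(\<lambda>x. \<bar>f x\<bar>) ` V' \<noteq> {}" by blast
    obtain x where xV': "x \<in> V'" and xm: "\<bar>f x\<bar> = Min ((\<lambda>x. \<bar>f x\<bar>) ` V')"
      using Min_in[OF finite_imageI[OF finV'] ne] by (metis imageE)
    have xmin: "\<bar>f x\<bar> \<le> \<bar>f y\<bar>" if "y \<in> V'" for y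
    proof -
      have "\<bar>f y\<bar> \<in> (\<lambda>x. \<bar>f x\<bar>) ` V'" using that by (rule imageI)
      from Min_le[OF finite_imageI[OF finV'] this] show ?thesis unfolding xm[symmetric] .
    qed
    have xV: "x \<in> V" and dx: "d x > 0" using xV' unfolding V'_def by auto
    then have "N x \<noteq> {}" using dN by auto
    then obtain y0 where "y0 \<in> N x" by blast
    have "f x \<noteq> 0"
    proof
      assume "f x = 0"
      with good[OF xV \<open>y0 \<in> N x\<close>] show False by simp
    qed
    have nb: "\<bar>f x\<bar> \<le> \<bar>f y\<bar>" "s x y * f x * f y > 0" "\<bar>s x y\<bar> = 1" if "y \<in> N x" for y
    proof -
      have yV: "y \<in> V" and "adj E y x" using that unfolding N_def by (auto simp: adj_iff)
      then have "x \<in> N y" unfolding N_def using xV by simp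
      then have "card (N y) > 0" using finN[of y] by (auto simp: card_gt_0_iff)
      then have "d y > 0" using dN by simp
      then show "\<bar>f x\<bar> \<le> \<bar>f y\<bar>" using xmin yV unfolding V'_def by simp
      show "s x y * f x * f y > 0" using good[OF xV that] .
      show "\<bar>s x y\<bar> = 1" using s_abs that unfolding N_def by simp
    qed
    have lhs: "(\<Sum>y\<in>N x. phi_p p (f x - s x y * f y)) = lam * d x * phi_p p (f x)" using E1[OF xV] .
    show False
    proof (cases "f x > 0")
      case True
      have "phi_p p (f x - s x y * f y) \<le> 0" if "y \<in> N x" for y
      proof -
        have "f x * (s x y * f y) > 0" using nb(2)[OF that] by (simp add: mult_ac)
        then have "s x y * f y > 0" using True by (simp add: zero_less_mult_iff)
        moreover have "\<bar>s x y * f y\<bar> = \<bar>f y\<bar>" using nb(3)[OF that] by (simp add: abs_mult)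
        ultimately have "f x - s x y * f y \<le> 0" using nb(1)[OF that] True by simp
        then show ?thesis using phi_pos[of p "f x - s x y * f y"] by linarith
      qed
      then have "(\<Sum>y\<in>N x. phi_p p (f x - s x y * f y)) \<le> 0" by (intro sum_nonpos) auto
      moreover have "lam * d x * phi_p p (f x) > 0" using lampos dx True phi_pos[of p "f x"] by simp
      ultimately show False using lhs by simp
    next
      case False
      then have fneg: "f x < 0" using \<open>f x \<noteq> 0\<close> by simp
      have "phi_p p (f x - s x y * f y) \<ge> 0" if "y \<in> N x" for y
      proof -
        have "f x * (s x y * f y) > 0" using nb(2)[OF that] by (simp add: mult_ac)
        then have "s x y * f y < 0" using fneg by (simp add: zero_less_mult_iff)
        moreover have "\<bar>s x y * f y\<bar> = \<bar>f y\<bar>" using nb(3)[OF that] by (simp add: abs_mult)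
        ultimately have "f x - s x y * f y \<ge> 0" using nb(1)[OF that] fneg by simp
        then show ?thesis using phi_nonneg[of p "f x - s x y * f y"] by linarith
      qed
      then have "(\<Sum>y\<in>N x. phi_p p (f x - s x y * f y)) \<ge> 0" by (intro sum_nonneg) auto
      moreover have "lam * d x * phi_p p (f x) < 0"
      proof -
        have "phi_p p (f x) < 0" using fneg phi_nonneg[of p "f x"] by linarith
        moreover have "lam * d x > 0" using lampos dx by simp
        ultimately show ?thesis using mult_pos_neg by blast
      qed
      ultimately show False using lhs by simp
    qed
  qed
  then obtain v w where vV: "v \<in> V" and wV: "w \<in> V" and avw: "adj E v w" and bvw: "s v w * f v * f w \<le> 0"
    by blast
  define M where "M = Max ((\<lambda>x. \<bar>f x\<bar>) ` V)"
  have neV: "V \<noteq> {}" using x0 by blast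
  have neI: "(\<lambda>x. \<bar>f x\<bar>) ` V \<noteq> {}" using neV by simp
  have "M \<in> (\<lambda>x. \<bar>f x\<bar>) ` V" unfolding M_def by (rule Max_in[OF finite_imageI[OF finV] neI])
  then obtain u where uV: "u \<in> V" and uM': "M = \<bar>f u\<bar>" by (rule imageE)
  have uM: "\<bar>f u\<bar> = M" using uM' by simp
  have leM: "\<bar>f x\<bar> \<le> M" if "x \<in> V" for x
  proof -
    have "\<bar>f x\<bar> \<in> (\<lambda>x. \<bar>f x\<bar>) ` V" using that by (rule imageI)
    from Max_ge[OF finite_imageI[OF finV] this] show ?thesis unfolding M_def .
  qed
  have Mpos: "M > 0" using leM[OF x0(1)] x0(2) by simp
  define D where "D = diameter V E"
  have distD: "graph_dist V E x y \<le> D" if "x \<in> V" "y \<in> V" for x y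
  proof -
    have eq: "{graph_dist V E x y | x y. x \<in> V \<and> y \<in> V} = (\<lambda>(x, y). graph_dist V E x y) ` (V \<times> V)"
      by auto
    have fin: "finite {graph_dist V E x y | x y. x \<in> V \<and> y \<in> V}" unfolding eq using finV by simp
    have mem: "graph_dist V E x y \<in> {graph_dist V E x y | x y. x \<in> V \<and> y \<in> V}" using that by blast
    show ?thesis unfolding D_def diameter_def by (rule Max_ge[OF fin mem])
  qed
  obtain P0 where P0: "walk V E P0" "hd P0 = u" "last P0 = v" "length P0 = Suc (graph_dist V E u v)"
  proof -
    obtain xs where xs: "walk V E xs" "hd xs = u" "last xs = v" using conn uV vV unfolding connected_graph_def by blast
    then have "length xs = Suc (length xs - 1)" unfolding walk_def by simp
    then have ex: "\<exists>n. \<exists>xs. walk V E xs \<and> hd xs = u \<and> last xs = v \<and> length xs = Suc n" using xs by blast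
    obtain ys where "walk V E ys \<and> hd ys = u \<and> last ys = v \<and>
        length ys = Suc (LEAST n. \<exists>xs. walk V E xs \<and> hd xs = u \<and> last xs = v \<and> length xs = Suc n)"
      using LeastI_ex[OF ex] by blast
    then show ?thesis using that unfolding graph_dist_def by blast
  qed
  obtain P where P1': "walk V E P" "distinct P" "hd P = hd P0" "last P = last P0" "length P \<le> length P0"
    using walk_distinct[OF P0(1)] by blast
  have P: "walk V E P" "distinct P" "hd P = u" "last P = v" "length P \<le> D + 1"
    using P1' P0 distD[OF uV vV] by simp_all
  have "\<exists>Q0 a b. walk V E (Q0 @ [b]) \<and> distinct (Q0 @ [b]) \<and> Q0 \<noteq> [] \<and> hd Q0 = u \<and> last Q0 = a
      \<and> length Q0 \<le> D + 1 \<and> s a b * f a * f b \<le> 0"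
  proof -
    have Pne: "P \<noteq> []" and PV: "set P \<subseteq> V" and Padj: "\<forall>e\<in>set (pth P). adj E (fst e) (snd e)"
      using P(1) unfolding walk_alt by blast+
    show ?thesis
    proof (cases "w \<in> set P")
      case False
      have "walk V E (P @ [w])" unfolding walk_alt using Pne PV wV Padj avw P(4) by (simp add: pth_snoc)
      moreover have "distinct (P @ [w])" using P(2) False by simp
      ultimately show ?thesis using P Pne bvw by blast
    next
      case True
      then obtain A B where PAB: "P = A @ w # B" by (meson split_list)
      have "v \<noteq> w" using adj_neq[OF avw] .
      have Bne: "B \<noteq> []"
      proof
        assume "B = []"
        then have "last P = w" using PAB by simp
        then show False using P(4) \<open>v \<noteq> w\<close> by simp
      qed
      have "last B = v" using P(4) PAB Bne by simp
      then have vB: "v \<in> set B" using Bne by (metis last_in_set)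
      have pa: "set (pth (A @ [w])) \<subseteq> set (pth P)" using pth_app[of A w B] PAB by simp
      have AV: "set (A @ [w]) \<subseteq> V" using PV PAB by simp
      have wk: "walk V E ((A @ [w]) @ [v])" unfolding walk_alt
        using AV vV adj_sym[OF avw] pa Padj pth_snoc[of "A @ [w]" v] by auto
      have ds: "distinct ((A @ [w]) @ [v])" using P(2) vB unfolding PAB by auto
      have hA: "hd (A @ [w]) = u" using P(3) PAB by (cases A) simp_all
      have lA: "length (A @ [w]) \<le> D + 1" using P(5) PAB Bne by (cases B) simp_all
      have "s w v * f w * f v \<le> 0" using bvw s_sym[of v w] by (simp add: mult_ac)
      moreover have "A @ [w] \<noteq> []" "last (A @ [w]) = w" by simp_all
      ultimately show ?thesis using wk ds hA lA by blast
    qed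
  qed
  then obtain Q0 a b where Q: "walk V E (Q0 @ [b])" "distinct (Q0 @ [b])" "Q0 \<noteq> []" "hd Q0 = u"
    "last Q0 = a" "length Q0 \<le> D + 1" "s a b * f a * f b \<le> 0" by blast
  define Lp where "Lp = pth (Q0 @ [b])"
  define g where "g e = \<bar>f (fst e) - s (fst e) (snd e) * f (snd e)\<bar>" for e
  have Lp_eq: "Lp = pth Q0 @ [(a, b)]" unfolding Lp_def using pth_snoc[OF Q(3)] Q(5) by simp
  have Lp_adj: "\<forall>e\<in>set Lp. adj E (fst e) (snd e)" using Q(1) unfolding walk_alt Lp_def by blast
  have Lp_V: "set Lp \<subseteq> V \<times> V" using Q(1) pth_set_sub[of "Q0 @ [b]"] unfolding walk_alt Lp_def by blast
  have t0: "sum_list (map g (pth Q0)) \<ge> \<bar>f u\<bar> - \<bar>f a\<bar>"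
    using tele[OF Q(3), of s f] Lp_adj s_abs Q(4,5) unfolding Lp_eq g_def by auto
  have "f a * (s a b * f b) \<le> 0" using Q(7) by (simp add: mult_ac)
  then have "g (a, b) = \<bar>f a\<bar> + \<bar>s a b * f b\<bar>" unfolding g_def
    by (simp only: fst_conv snd_conv abs_opp)
  also have "\<bar>s a b * f b\<bar> = \<bar>f b\<bar>" using s_abs Lp_adj unfolding Lp_eq by (simp add: abs_mult)
  finally have "sum_list (map g Lp) \<ge> M" using t0 uM unfolding Lp_eq by simp
  define P1 where "P1 = set Lp"
  have dLp: "distinct Lp" unfolding Lp_def using pth_distinct Q(2) by blast
  have sumP1: "sum g P1 \<ge> M" using \<open>sum_list (map g Lp) \<ge> M\<close> dLp
    unfolding P1_def by (simp add: sum_list_distinct_conv_sum_set)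
  have cardP1: "card P1 \<le> D + 1" unfolding P1_def using distinct_card[OF dLp] Q(6)
    unfolding Lp_eq by (simp add: pth_len)
  define K where "K = real (D + 1) powr (p - 1)"
  have Kpos: "K > 0" unfolding K_def by simp
  have h1: "M powr p \<le> (sum g P1) powr p" using sumP1 Mpos p0 by (intro powr_mono2) auto
  also have "\<dots> \<le> real (card P1) powr (p - 1) * (\<Sum>e\<in>P1. g e powr p)"
    using holder[of P1 g p] p1 unfolding P1_def g_def by simp
  also have "\<dots> \<le> K * (\<Sum>e\<in>P1. g e powr p)" unfolding K_def using cardP1 p1
    by (intro mult_right_mono powr_mono2 sum_nonneg) auto
  finally have h2: "M powr p \<le> K * (\<Sum>e\<in>P1. g e powr p)" .
  have Gsym: "G y x = G x y" if "adj E x y" for x y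
  proof -
    define t where "t = s x y"
    have t1: "\<bar>t\<bar> = 1" using s_abs[OF that] t_def by simp
    then have tt: "t * t = 1" by (metis abs_mult_self_eq mult_cancel_left1)
    have "f y - s y x * f x = (- t) * (f x - t * f y)"
      using tt by (simp add: s_sym[of y x] t_def algebra_simps)
    then show ?thesis unfolding G_def using t1 by (simp add: abs_mult t_def)
  qed
  have gG: "g e powr p = G (fst e) (snd e)" for e unfolding g_def G_def by simp
  have TS: "T = (\<Sum>e\<in>Sigma V N. G (fst e) (snd e))"
    unfolding T_def using sum.Sigma[OF finV, of N "\<lambda>x y. G x y"] finN by (simp add: case_prod_beta)
  have P1S: "P1 \<subseteq> Sigma V N" using Lp_adj Lp_V unfolding P1_def N_def by auto
  define P2 where "P2 = prod.swap ` P1"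
  have P2S: "P2 \<subseteq> Sigma V N" using Lp_adj Lp_V unfolding P2_def P1_def N_def by (auto simp: adj_iff)
  have dis: "P1 \<inter> P2 = {}" using pth_swap[OF Q(2)] unfolding P1_def P2_def Lp_def by auto
  have finP1: "finite P1" unfolding P1_def by simp
  have sP2: "(\<Sum>e\<in>P2. G (fst e) (snd e)) = (\<Sum>e\<in>P1. G (fst e) (snd e))"
  proof -
    have "(\<Sum>e\<in>P2. G (fst e) (snd e)) = (\<Sum>e\<in>P1. G (snd e) (fst e))"
      unfolding P2_def by (subst sum.reindex) (auto simp: inj_on_def)
    also have "\<dots> = (\<Sum>e\<in>P1. G (fst e) (snd e))"
    proof (rule sum.cong[OF refl])
      fix e assume "e \<in> P1"
      then have "adj E (fst e) (snd e)" using Lp_adj unfolding P1_def by blast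
      then show "G (snd e) (fst e) = G (fst e) (snd e)" by (rule Gsym)
    qed
    finally show ?thesis .
  qed
  have "2 * (\<Sum>e\<in>P1. G (fst e) (snd e)) = (\<Sum>e\<in>P1 \<union> P2. G (fst e) (snd e))"
    using sum.union_disjoint[OF finP1 _ dis, of "\<lambda>e. G (fst e) (snd e)"] finP1 sP2
    unfolding P2_def by simp
  also have "\<dots> \<le> T" unfolding TS using P1S P2S finV finN
    by (intro sum_mono2) (auto simp: G_def)
  finally have h3: "2 * (\<Sum>e\<in>P1. g e powr p) \<le> T" by (simp add: gG)
  have Wle: "W \<le> M powr p * real (volume V E)"
  proof -
    have "W \<le> (\<Sum>x\<in>V. d x * M powr p)" unfolding W_def
      using leM p0 by (intro sum_mono mult_left_mono powr_mono2) (auto simp: d_def)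
    also have "\<dots> = M powr p * real (volume V E)"
      unfolding volume_def d_def by (simp add: sum_distrib_left mult.commute)
    finally show ?thesis .
  qed
  have "K * (\<Sum>e\<in>P1. g e powr p) \<le> K * (lam * W)" using h3 TW Kpos by (intro mult_left_mono) auto
  with h2 have "M powr p \<le> K * (lam * W)" by linarith
  also have "\<dots> \<le> K * (lam * (M powr p * real (volume V E)))"
    using Wle lampos Kpos by (intro mult_left_mono) auto
  finally have "M powr p * 1 \<le> M powr p * (K * lam * real (volume V E))" by (simp add: algebra_simps)
  then have one: "1 \<le> K * lam * real (volume V E)" using Mpos by (simp add: mult_le_cancel_left_pos)
  have "volume V E \<noteq> 0"
  proof
    assume "volume V E = 0"
    then show False using one by simp
  qed
  then have vpos: "real (volume V E) > 0" by simp
  have KV: "0 < K * real (volume V E)" using Kpos vpos by simp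
  have "1 / (K * real (volume V E)) \<le> lam \<longleftrightarrow> 1 \<le> lam * (K * real (volume V E))"
    by (rule pos_divide_le_eq[OF KV])
  also have "\<dots>" using one by (simp add: mult_ac)
  finally show ?thesis unfolding K_def D_def .
qed

end
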